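(* Let $\phi_1,\phi_2:\mathbb R^n\to\mathbb R$ both satisfy the standing assumption, let $f_1,f_2:\mathbb R^n\to\overline{\mathbb R}$ be proper, lsc, convex, with $f_i$ a-smooth relative to $\phi_i$ ($i=1,2$), and let $a_1,a_2>0$. Assume that one of $f_1,f_2$ is bounded below and the other is coercive, or that one of them is super-coercive. Then $(a_1\star f_1)\,\square\,(a_2\star f_2)$ is a-smooth relative to the reference function $\phi:=(a_1\star\phi_1)\,\square\,(a_2\star\phi_2)$.
   Context: Standing assumption on a reference function $\psi:\mathbb R^n\to\mathbb R$: convex, finite-valued, differentiable and strictly convex (Legendre with full domain), super-coercive ($\psi(x)/\|x\|\to\infty$). Epi-scaling: $(a\star f)(x)=af(x/a)$. Infimal convolution: $(g\,\square\,h)(x)=\inf_y g(y)+h(x-y)$. Coercive: $f(x)\to\infty$ as $\|x\|\to\infty$. A proper lsc $h$ is a-weakly convex relative to $\psi$ if for every $(\bar x,\bar v)\in\operatorname{graph}\partial h$ (limiting subdifferential): $h(x)\ge h(\bar x)-\psi(x-\bar x+\nabla\psi^*(-\bar v))+\psi(\nabla\psi^*(-\bar v))$ for all $x$; $f$ is a-smooth relative to $\psi$ if $f$ is real-valued, continuously differentiable, and both $f$ and $-f$ are a-weakly convex relative to $\psi$. *)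

theory Defs
  imports "HOL-Analysis.Analysis"
begin

definition proper_fun :: "('a \<Rightarrow> ereal) \<Rightarrow> bool" where
  "proper_fun f \<longleftrightarrow> (\<forall>x. f x \<noteq> -\<infinity>) \<and> (\<exists>x. f x \<noteq> \<infinity>)"

definition lsc_fun :: "('a::topological_space \<Rightarrow> ereal) \<Rightarrow> bool" where
  "lsc_fun f \<longleftrightarrow> (\<forall>x c. c < f x \<longrightarrow> eventually (\<lambda>y. c < f y) (at x))"

definition convex_fun :: "('a::real_vector \<Rightarrow> ereal) \<Rightarrow> bool" where
  "convex_fun f \<longleftrightarrow> (\<forall>x y t. 0 < t \<and> t < 1 \<longrightarrow>
     f ((1 - t) *\<^sub>R x + t *\<^sub>R y) \<le> ereal (1 - t) * f x + ereal t * f y)"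

definition coercive_fun :: "('a::real_normed_vector \<Rightarrow> ereal) \<Rightarrow> bool" where
  "coercive_fun f \<longleftrightarrow> (f \<longlongrightarrow> \<infinity>) at_infinity"

definition supercoercive_fun :: "('a::real_normed_vector \<Rightarrow> ereal) \<Rightarrow> bool" where
  "supercoercive_fun f \<longleftrightarrow> ((\<lambda>x. f x / ereal (norm x)) \<longlongrightarrow> \<infinity>) at_infinity"

definition bounded_below_fun :: "('a \<Rightarrow> ereal) \<Rightarrow> bool" where
  "bounded_below_fun f \<longleftrightarrow> (\<exists>c::real. \<forall>x. ereal c \<le> f x)"

definition strictly_convex_real :: "('a::real_vector \<Rightarrow> real) \<Rightarrow> bool" where
  "strictly_convex_real \<psi> \<longleftrightarrow> (\<forall>x y t. x \<noteq> y \<and> 0 < t \<and> t < 1 \<longrightarrow>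
     \<psi> ((1 - t) *\<^sub>R x + t *\<^sub>R y) < (1 - t) * \<psi> x + t * \<psi> y)"

text \<open>Standing assumption on a reference function: convex, finite, differentiable,
  strictly convex (Legendre with full domain), super-coercive.\<close>
definition reference_fun :: "('a::euclidean_space \<Rightarrow> real) \<Rightarrow> bool" where
  "reference_fun \<psi> \<longleftrightarrow> convex_on UNIV \<psi> \<and> (\<forall>x. \<psi> differentiable at x)
     \<and> strictly_convex_real \<psi> \<and> supercoercive_fun (\<lambda>x. ereal (\<psi> x))"

definition grad :: "('a::euclidean_space \<Rightarrow> real) \<Rightarrow> 'a \<Rightarrow> 'a" where
  "grad g x = (THE v. (g has_derivative (\<lambda>h. v \<bullet> h)) (at x))"

text \<open>Convex (Fenchel) conjugate; finite for super-coercive functions.\<close>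
definition conj_fun :: "('a::euclidean_space \<Rightarrow> real) \<Rightarrow> 'a \<Rightarrow> real" where
  "conj_fun \<psi> y = (SUP x. y \<bullet> x - \<psi> x)"

definition epi_scale :: "real \<Rightarrow> ('a::real_vector \<Rightarrow> ereal) \<Rightarrow> 'a \<Rightarrow> ereal" where
  "epi_scale a f x = ereal a * f (x /\<^sub>R a)"

definition infconv :: "('a::real_vector \<Rightarrow> ereal) \<Rightarrow> ('a \<Rightarrow> ereal) \<Rightarrow> 'a \<Rightarrow> ereal" where
  "infconv g h x = (INF y. g y + h (x - y))"

definition frechet_subdiff :: "('a::euclidean_space \<Rightarrow> ereal) \<Rightarrow> 'a \<Rightarrow> 'a set" where
  "frechet_subdiff h x = {v. \<bar>h x\<bar> \<noteq> \<infinity> \<and>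
     (\<forall>e>0. \<exists>d>0. \<forall>y. norm (y - x) < d \<longrightarrow>
        h x + ereal (v \<bullet> (y - x) - e * norm (y - x)) \<le> h y)}"

definition limiting_subdiff :: "('a::euclidean_space \<Rightarrow> ereal) \<Rightarrow> 'a \<Rightarrow> 'a set" where
  "limiting_subdiff h x = {v. \<bar>h x\<bar> \<noteq> \<infinity> \<and> (\<exists>xs vs. xs \<longlonglongrightarrow> x \<and> (\<lambda>k. h (xs k)) \<longlonglongrightarrow> h x \<and>
     (\<forall>k. vs k \<in> frechet_subdiff h (xs k)) \<and> vs \<longlonglongrightarrow> v)}"

definition a_weakly_convex_rel :: "('a::euclidean_space \<Rightarrow> real) \<Rightarrow> ('a \<Rightarrow> ereal) \<Rightarrow> bool" where
  "a_weakly_convex_rel \<psi> h \<longleftrightarrow>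
     (\<forall>xb vb. vb \<in> limiting_subdiff h xb \<longrightarrow>
        (\<forall>x. h x \<ge> h xb - ereal (\<psi> (x - xb + grad (conj_fun \<psi>) (- vb)))
                      + ereal (\<psi> (grad (conj_fun \<psi>) (- vb)))))"

definition a_smooth_rel :: "('a::euclidean_space \<Rightarrow> real) \<Rightarrow> ('a \<Rightarrow> ereal) \<Rightarrow> bool" where
  "a_smooth_rel \<psi> f \<longleftrightarrow> (\<forall>x. \<bar>f x\<bar> \<noteq> \<infinity>) \<and>
     (\<exists>G. (\<forall>x. ((\<lambda>y. real_of_ereal (f y)) has_derivative (\<lambda>h. G x \<bullet> h)) (at x))
          \<and> continuous_on UNIV G) \<and>
     a_weakly_convex_rel \<psi> f \<and> a_weakly_convex_rel \<psi> (\<lambda>x. - f x)"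

end

theory Submission
  imports Defs
begin

lemma grad_unique:
  assumes "(f has_derivative (\<lambda>h. v \<bullet> h)) (at x)"
  shows "grad f x = v"
proof -
  have "\<And>w. (f has_derivative (\<lambda>h. w \<bullet> h)) (at x) \<Longrightarrow> w = v"
  proof -
    fix w assume "(f has_derivative (\<lambda>h. w \<bullet> h)) (at x)"
    from has_derivative_unique[OF this assms] have "(\<lambda>h. w \<bullet> h) = (\<lambda>h. v \<bullet> h)" .
    then have "w \<bullet> (w - v) = v \<bullet> (w - v)" by metis
    then have "(w - v) \<bullet> (w - v) = 0" by (simp add: inner_diff_left)
    then show "w = v" by simp
  qed
  then show ?thesis unfolding grad_def using assms by (rule the_equality[rotated])
qed

lemma linear_repr:
  fixes D :: "'a::euclidean_space \<Rightarrow> real"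
  assumes "linear D"
  shows "D = (\<lambda>h. (\<Sum>b\<in>Basis. D b *\<^sub>R b) \<bullet> h)"
proof
  fix h
  have "D h = D (\<Sum>b\<in>Basis. (h \<bullet> b) *\<^sub>R b)" by (simp add: euclidean_representation)
  also have "\<dots> = (\<Sum>b\<in>Basis. (h \<bullet> b) * D b)"
    using assms by (simp add: linear_sum linear_scale)
  also have "\<dots> = (\<Sum>b\<in>Basis. D b *\<^sub>R b) \<bullet> h"
    by (simp add: inner_sum_left inner_sum_right inner_commute mult.commute)
  finally show "D h = (\<Sum>b\<in>Basis. D b *\<^sub>R b) \<bullet> h" .
qed

lemma grad_works:
  fixes f :: "'a::euclidean_space \<Rightarrow> real"
  assumes "f differentiable at x"
  shows "(f has_derivative (\<lambda>h. grad f x \<bullet> h)) (at x)"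
proof -
  from assms obtain D where D: "(f has_derivative D) (at x)" by (auto simp: differentiable_def)
  then have "linear D" using has_derivative_linear by blast
  from linear_repr[OF this] D have "(f has_derivative (\<lambda>h. (\<Sum>b\<in>Basis. D b *\<^sub>R b) \<bullet> h)) (at x)" by simp
  moreover from grad_unique[OF this] have "grad f x = (\<Sum>b\<in>Basis. D b *\<^sub>R b)" .
  ultimately show ?thesis by simp
qed

lemma tangent_ineq:
  fixes f :: "'a::euclidean_space \<Rightarrow> real"
  assumes cvx: "\<And>x y t. 0 < t \<Longrightarrow> t < 1 \<Longrightarrow> f ((1 - t) *\<^sub>R x + t *\<^sub>R y) \<le> (1 - t) * f x + t * f y"
    and D: "(f has_derivative (\<lambda>h. g \<bullet> h)) (at z)"
  shows "f z + g \<bullet> (w - z) \<le> f w"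
proof (cases "w = z")
  case True then show ?thesis by simp
next
  case False
  let ?d = "w - z"
  have nd: "norm ?d > 0" using False by simp
  show ?thesis
  proof (rule field_le_epsilon)
    fix e :: real assume e: "e > 0"
    let ?e = "e / norm ?d"
    have "?e > 0" using e nd by simp
    with D obtain dl where dl: "dl > 0" and
      H: "\<And>y. norm (y - z) < dl \<Longrightarrow> norm (f y - f z - g \<bullet> (y - z)) \<le> ?e * norm (y - z)"
      unfolding has_derivative_at_alt by blast
    define t where "t = min (1/2) (dl / (2 * norm ?d))"
    have t0: "t > 0" and t1: "t < 1" using dl nd by (auto simp: t_def)
    have "t * norm ?d \<le> dl / 2" using nd by (auto simp: t_def min_def field_simps)
    then have tn: "norm ((z + t *\<^sub>R ?d) - z) < dl" using t0 dl by simp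
    have eq: "(1 - t) *\<^sub>R z + t *\<^sub>R w = z + t *\<^sub>R ?d" by (simp add: algebra_simps)
    have c: "f (z + t *\<^sub>R ?d) \<le> (1 - t) * f z + t * f w" using cvx[OF t0 t1, of z w] eq by simp
    from H[OF tn] have "f (z + t *\<^sub>R ?d) - f z - t * (g \<bullet> ?d) \<ge> - (?e * (t * norm ?d))"
      using t0 by (auto simp: abs_le_iff)
    then have "t * (g \<bullet> ?d) - t * e \<le> f (z + t *\<^sub>R ?d) - f z" using nd by (simp add: field_simps)
    with c have "t * (g \<bullet> ?d) - t * e \<le> t * (f w - f z)" by (simp add: algebra_simps)
    then have "t * (g \<bullet> ?d) \<le> t * (f w - f z + e)" by (simp add: algebra_simps)
    then have "g \<bullet> ?d \<le> f w - f z + e" using t0 by simp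
    then show "f z + g \<bullet> (w - z) \<le> f w + e" by simp
  qed
qed


lemma conj_bound:
  fixes \<psi> :: "'a::euclidean_space \<Rightarrow> real"
  assumes tan: "\<And>w. \<psi> z + g \<bullet> (w - z) \<le> \<psi> w"
    and grow: "\<And>\<epsilon>. \<epsilon> > 0 \<Longrightarrow> \<exists>\<delta>>0. \<forall>w. \<epsilon> \<le> norm (w - z) \<longrightarrow> \<psi> z + g \<bullet> (w - z) + \<delta> * norm (w - z) \<le> \<psi> w"
    and e: "e > 0"
  shows "\<exists>\<delta>>0. \<forall>g'. norm (g' - g) < \<delta> \<longrightarrow> (\<forall>w. g' \<bullet> w - \<psi> w \<le> g' \<bullet> z - \<psi> z + e * norm (g' - g))"
proof -
  obtain \<delta> where d: "\<delta> > 0" and D: "\<And>w. e \<le> norm (w - z) \<Longrightarrow> \<psi> z + g \<bullet> (w - z) + \<delta> * norm (w - z) \<le> \<psi> w"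
    using grow[OF e] by blast
  have "\<forall>g'. norm (g' - g) < \<delta> \<longrightarrow> (\<forall>w. g' \<bullet> w - \<psi> w \<le> g' \<bullet> z - \<psi> z + e * norm (g' - g))"
  proof (intro allI impI)
    fix g' w assume g': "norm (g' - g) < \<delta>"
    have eq: "g' \<bullet> w - \<psi> w = g' \<bullet> z - \<psi> z + (g' - g) \<bullet> (w - z) + (\<psi> z + g \<bullet> (w - z) - \<psi> w)"
      by (simp add: algebra_simps inner_diff_left inner_diff_right)
    have cs: "(g' - g) \<bullet> (w - z) \<le> norm (g' - g) * norm (w - z)" by (rule norm_cauchy_schwarz)
    show "g' \<bullet> w - \<psi> w \<le> g' \<bullet> z - \<psi> z + e * norm (g' - g)"
    proof (cases "e \<le> norm (w - z)")
      case True
      from D[OF True] have "\<psi> z + g \<bullet> (w - z) - \<psi> w \<le> - \<delta> * norm (w - z)" by simp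
      moreover have "norm (g' - g) * norm (w - z) \<le> \<delta> * norm (w - z)"
        using g' by (intro mult_right_mono) auto
      moreover have "0 \<le> e * norm (g' - g)" using e by simp
      ultimately show ?thesis using eq cs by linarith
    next
      case False
      have "norm (g' - g) * norm (w - z) \<le> norm (g' - g) * e"
        using False by (intro mult_left_mono) auto
      with eq cs tan[of w] show ?thesis by (simp add: mult.commute)
    qed
  qed
  with d show ?thesis by blast
qed

lemma conj_grad:
  fixes \<psi> :: "'a::euclidean_space \<Rightarrow> real"
  assumes tan: "\<And>w. \<psi> z + g \<bullet> (w - z) \<le> \<psi> w"
    and grow: "\<And>\<epsilon>. \<epsilon> > 0 \<Longrightarrow> \<exists>\<delta>>0. \<forall>w. \<epsilon> \<le> norm (w - z) \<longrightarrow> \<psi> z + g \<bullet> (w - z) + \<delta> * norm (w - z) \<le> \<psi> w"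
  shows "grad (conj_fun \<psi>) g = z"
proof -
  have bnds: "g' \<bullet> z - \<psi> z \<le> conj_fun \<psi> g' \<and> conj_fun \<psi> g' \<le> g' \<bullet> z - \<psi> z + e"
    if H: "\<forall>w. g' \<bullet> w - \<psi> w \<le> g' \<bullet> z - \<psi> z + e" for g' e
  proof
    have bdd: "bdd_above (range (\<lambda>w. g' \<bullet> w - \<psi> w))" using H by (intro bdd_aboveI2) blast
    show "g' \<bullet> z - \<psi> z \<le> conj_fun \<psi> g'" unfolding conj_fun_def
      by (rule cSUP_upper[OF UNIV_I bdd])
    show "conj_fun \<psi> g' \<le> g' \<bullet> z - \<psi> z + e" unfolding conj_fun_def
      using H by (intro cSUP_least) auto
  qed
  have cg: "conj_fun \<psi> g = g \<bullet> z - \<psi> z"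
  proof -
    obtain \<delta> where "\<delta> > 0" "\<forall>g'. norm (g' - g) < \<delta> \<longrightarrow> (\<forall>w. g' \<bullet> w - \<psi> w \<le> g' \<bullet> z - \<psi> z + 1 * norm (g' - g))"
      using conj_bound[OF tan grow, of 1] by auto
    then have "\<forall>w. g \<bullet> w - \<psi> w \<le> g \<bullet> z - \<psi> z + 0"
      by (metis add.right_neutral diff_self mult_1 norm_zero)
    from bnds[OF this] show ?thesis by simp
  qed
  have "(conj_fun \<psi> has_derivative (\<lambda>h. z \<bullet> h)) (at g)"
    unfolding has_derivative_at_alt
  proof (intro conjI allI impI)
    show "bounded_linear ((\<bullet>) z)" by (rule bounded_linear_inner_right)
    fix e :: real assume e: "e > 0"
    obtain \<delta> where d: "\<delta> > 0" and H: "\<forall>g'. norm (g' - g) < \<delta> \<longrightarrow> (\<forall>w. g' \<bullet> w - \<psi> w \<le> g' \<bullet> z - \<psi> z + e * norm (g' - g))"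
      using conj_bound[OF tan grow e] by auto
    show "\<exists>d>0. \<forall>y. norm (y - g) < d \<longrightarrow> norm (conj_fun \<psi> y - conj_fun \<psi> g - z \<bullet> (y - g)) \<le> e * norm (y - g)"
    proof (intro exI[of _ \<delta>] conjI allI impI d)
      fix y assume y: "norm (y - g) < \<delta>"
      from bnds[of y] H y have b: "y \<bullet> z - \<psi> z \<le> conj_fun \<psi> y" "conj_fun \<psi> y \<le> y \<bullet> z - \<psi> z + e * norm (y - g)" by auto
      have "conj_fun \<psi> y - conj_fun \<psi> g - z \<bullet> (y - g) = conj_fun \<psi> y - (y \<bullet> z - \<psi> z)"
        by (simp add: cg inner_diff_right inner_commute)
      with b show "norm (conj_fun \<psi> y - conj_fun \<psi> g - z \<bullet> (y - g)) \<le> e * norm (y - g)" by simp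
    qed
  qed
  then show ?thesis by (rule grad_unique)
qed


lemma ref_cvx:
  assumes "reference_fun \<psi>" "0 < t" "t < 1"
  shows "\<psi> ((1 - t) *\<^sub>R x + t *\<^sub>R y) \<le> (1 - t) * \<psi> x + t * \<psi> y"
  using assms unfolding reference_fun_def convex_on_def by auto

lemma ref_deriv:
  assumes "reference_fun \<psi>"
  shows "(\<psi> has_derivative (\<lambda>h. grad \<psi> x \<bullet> h)) (at x)"
  using assms unfolding reference_fun_def by (auto intro: grad_works)

lemma ref_cont:
  assumes "reference_fun \<psi>"
  shows "continuous_on UNIV \<psi>"
proof -
  have "\<forall>x. isCont \<psi> x" using assms unfolding reference_fun_def
    by (auto intro: differentiable_imp_continuous_within)
  then show ?thesis by (simp add: continuous_at_imp_continuous_on)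
qed

lemma ref_tan:
  assumes "reference_fun \<psi>"
  shows "\<psi> z + grad \<psi> z \<bullet> (w - z) \<le> \<psi> w"
  by (rule tangent_ineq[OF ref_cvx[OF assms] ref_deriv[OF assms]])

lemma ref_pos:
  assumes r: "reference_fun \<psi>" and ne: "w \<noteq> z"
  shows "\<psi> z + grad \<psi> z \<bullet> (w - z) < \<psi> w"
proof -
  let ?g = "grad \<psi> z"
  let ?m = "(1 - 1/2) *\<^sub>R z + (1/2::real) *\<^sub>R w"
  have "\<psi> ?m < (1 - 1/2) * \<psi> z + (1/2) * \<psi> w"
    using r[unfolded reference_fun_def strictly_convex_real_def] ne
    by (metis (no_types, lifting) divide_pos_pos half_gt_zero_iff less_numeral_extra(1) zero_less_numeral one_add_one field_sum_of_halves less_add_same_cancel2 zero_less_one)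
  moreover have "\<psi> z + ?g \<bullet> (?m - z) \<le> \<psi> ?m" by (rule ref_tan[OF r])
  moreover have "?m - z = (1/2) *\<^sub>R (w - z)" by (simp add: algebra_simps flip: scaleR_add_left)
  ultimately show ?thesis by (simp add: inner_scaleR_right)
qed

lemma ref_grow:
  assumes r: "reference_fun \<psi>" and e: "\<epsilon> > 0"
  shows "\<exists>\<delta>>0. \<forall>w. \<epsilon> \<le> norm (w - z) \<longrightarrow> \<psi> z + grad \<psi> z \<bullet> (w - z) + \<delta> * norm (w - z) \<le> \<psi> w"
proof -
  let ?g = "grad \<psi> z"
  define h where "h w = \<psi> w - \<psi> z - ?g \<bullet> (w - z)" for w
  have hc: "continuous_on (sphere z \<epsilon>) h" unfolding h_def
    by (intro continuous_intros continuous_on_subset[OF ref_cont[OF r]]) auto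
  obtain b :: 'a where b: "b \<in> Basis" using nonempty_Basis by blast
  have "z + \<epsilon> *\<^sub>R b \<in> sphere z \<epsilon>" using b e by (simp add: dist_norm)
  then have ne: "sphere z \<epsilon> \<noteq> {}" by blast
  obtain p where p: "p \<in> sphere z \<epsilon>" and pmin: "\<And>q. q \<in> sphere z \<epsilon> \<Longrightarrow> h p \<le> h q"
    using continuous_attains_inf[OF compact_sphere ne hc] by blast
  have "p \<noteq> z" using p e by auto
  then have m: "h p > 0" using ref_pos[OF r] unfolding h_def by (simp add: algebra_simps)
  define \<delta> where "\<delta> = h p / \<epsilon>"
  have d: "\<delta> > 0" using m e by (simp add: \<delta>_def)
  have "\<forall>w. \<epsilon> \<le> norm (w - z) \<longrightarrow> \<psi> z + ?g \<bullet> (w - z) + \<delta> * norm (w - z) \<le> \<psi> w"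
  proof (intro allI impI)
    fix w assume w: "\<epsilon> \<le> norm (w - z)"
    define t where "t = \<epsilon> / norm (w - z)"
    have nw: "norm (w - z) > 0" using w e by linarith
    have t0: "0 < t" and t1: "t \<le> 1" using nw e w by (auto simp: t_def)
    define q where "q = (1 - t) *\<^sub>R z + t *\<^sub>R w"
    have qz: "q - z = t *\<^sub>R (w - z)" by (simp add: q_def algebra_simps)
    have "norm (q - z) = \<epsilon>" using qz t0 nw e by (simp add: t_def)
    then have "q \<in> sphere z \<epsilon>" by (simp add: dist_norm norm_minus_commute)
    then have hq: "h p \<le> h q" by (rule pmin)
    have "h q \<le> t * h w"
    proof (cases "t = 1")
      case True then show ?thesis by (simp add: q_def)
    next
      case False
      then have "t < 1" using t1 by simp
      from ref_cvx[OF r t0 this, of z w] have "\<psi> q \<le> (1 - t) * \<psi> z + t * \<psi> w" by (simp add: q_def)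
      then have A: "\<psi> q \<le> \<psi> z - t * \<psi> z + t * \<psi> w" by (simp add: left_diff_distrib)
      have B: "?g \<bullet> (q - z) = t * (?g \<bullet> (w - z))" using qz by (simp add: inner_scaleR_right)
      have C: "h q = \<psi> q - \<psi> z - t * (?g \<bullet> (w - z))" unfolding h_def B ..
      have D: "t * h w = t * \<psi> w - t * \<psi> z - t * (?g \<bullet> (w - z))" unfolding h_def by (simp add: right_diff_distrib)
      show ?thesis using A C D by linarith
    qed
    with hq have "h p \<le> t * h w" by linarith
    then have "h p * norm (w - z) \<le> \<epsilon> * h w" using nw by (simp add: t_def field_simps)
    then have "\<delta> * norm (w - z) \<le> h w" using e by (simp add: \<delta>_def field_simps)
    then show "\<psi> z + ?g \<bullet> (w - z) + \<delta> * norm (w - z) \<le> \<psi> w" by (simp add: h_def)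
  qed
  with d show ?thesis by blast
qed


lemma coercive_min:
  fixes G :: "'a::euclidean_space \<Rightarrow> real"
  assumes c: "continuous_on UNIV G" and co: "\<And>M. \<exists>R. \<forall>y. R \<le> norm y \<longrightarrow> M \<le> G y"
  shows "\<exists>y. \<forall>y'. G y \<le> G y'"
proof -
  obtain R where R: "\<And>y. R \<le> norm y \<Longrightarrow> G 0 + 1 \<le> G y" using co by blast
  have ne: "cball (0::'a) \<bar>R\<bar> \<noteq> {}" by auto
  obtain y where y: "y \<in> cball 0 \<bar>R\<bar>" and ym: "\<And>y'. y' \<in> cball 0 \<bar>R\<bar> \<Longrightarrow> G y \<le> G y'"
    using continuous_attains_inf[OF compact_cball ne continuous_on_subset[OF c]] by blast
  have "G y \<le> G 0" using ym by simp
  have "G y \<le> G y'" for y'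
  proof (cases "y' \<in> cball 0 \<bar>R\<bar>")
    case True then show ?thesis by (rule ym)
  next
    case False then have "R \<le> norm y'" by auto
    from R[OF this] \<open>G y \<le> G 0\<close> show ?thesis by linarith
  qed
  then show ?thesis by blast
qed

lemma supercoercive_real:
  assumes "supercoercive_fun (\<lambda>x. ereal (p x))"
  shows "\<exists>R. \<forall>u. R \<le> norm u \<longrightarrow> M * norm u \<le> p u"
proof -
  from assms have "eventually (\<lambda>x. ereal M < ereal (p x) / ereal (norm x)) at_infinity"
    unfolding supercoercive_fun_def tendsto_PInfty by blast
  then obtain b where b: "\<And>x. b \<le> norm x \<Longrightarrow> ereal M < ereal (p x) / ereal (norm x)"
    unfolding eventually_at_infinity by blast
  have "M * norm u \<le> p u" if "max b 1 \<le> norm u" for u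
  proof -
    have n: "norm u > 0" using that by linarith
    from b[of u] that have "M < p u / norm u" using n by auto
    then show ?thesis using n by (simp add: field_simps)
  qed
  then show ?thesis by blast
qed

lemma coercive_real:
  assumes "coercive_fun (\<lambda>x. ereal (p x))"
  shows "\<exists>R. \<forall>u. R \<le> norm u \<longrightarrow> M \<le> p u"
proof -
  from assms have "eventually (\<lambda>x. ereal M < ereal (p x)) at_infinity"
    unfolding coercive_fun_def tendsto_PInfty by blast
  then obtain b where b: "\<And>x. b \<le> norm x \<Longrightarrow> ereal M < ereal (p x)"
    unfolding eventually_at_infinity by blast
  then have "\<forall>u. b \<le> norm u \<longrightarrow> M \<le> p u" by (auto intro: less_imp_le)
  then show ?thesis by blast
qed

lemma min_grad_zero:
  fixes G :: "'a::euclidean_space \<Rightarrow> real"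
  assumes "(G has_derivative (\<lambda>h. v \<bullet> h)) (at y)" "\<And>y'. G y \<le> G y'"
  shows "v = 0"
proof -
  have "(\<lambda>h. v \<bullet> h) = (\<lambda>h. 0)"
    by (rule has_derivative_local_min[OF assms(1)]) (simp add: assms(2))
  then have "v \<bullet> v = 0" by metis
  then show ?thesis by simp
qed

lemma ref_surj:
  assumes r: "reference_fun \<psi>"
  shows "\<exists>w. grad \<psi> w = g"
proof -
  define G where "G w = \<psi> w - g \<bullet> w" for w
  have c: "continuous_on UNIV G" unfolding G_def
    by (intro continuous_intros ref_cont[OF r])
  have co: "\<exists>R. \<forall>y. R \<le> norm y \<longrightarrow> M \<le> G y" for M
  proof -
    obtain R where R: "\<And>u. R \<le> norm u \<Longrightarrow> (norm g + 1) * norm u \<le> \<psi> u"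
      using supercoercive_real[of \<psi> "norm g + 1"] r unfolding reference_fun_def by blast
    have "M \<le> G y" if "max R M \<le> norm y" for y
    proof -
      have "(norm g + 1) * norm y \<le> \<psi> y" using R that by simp
      moreover have "g \<bullet> y \<le> norm g * norm y" by (rule norm_cauchy_schwarz)
      ultimately have "norm y \<le> G y" unfolding G_def by (simp add: algebra_simps)
      then show ?thesis using that by linarith
    qed
    then show ?thesis by blast
  qed
  obtain y where y: "\<And>y'. G y \<le> G y'" using coercive_min[OF c co] by blast
  have "(G has_derivative (\<lambda>h. (grad \<psi> y - g) \<bullet> h)) (at y)"
  proof -
    have "(G has_derivative (\<lambda>h. grad \<psi> y \<bullet> h - g \<bullet> h)) (at y)" unfolding G_def
      by (intro has_derivative_diff ref_deriv[OF r] bounded_linear_imp_has_derivative bounded_linear_inner_right)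
    then show ?thesis by (simp add: inner_diff_left)
  qed
  from min_grad_zero[OF this y] show ?thesis by auto
qed


lemma attain:
  fixes p1 p2 :: "'a::euclidean_space \<Rightarrow> real"
  assumes c1: "continuous_on UNIV p1" and c2: "continuous_on UNIV p2" and a1: "a1 > 0" and a2: "a2 > 0"
    and cond: "((\<exists>c. \<forall>u. c \<le> p1 u) \<and> (\<forall>M. \<exists>R. \<forall>u. R \<le> norm u \<longrightarrow> M \<le> p2 u))
       \<or> ((\<forall>M. \<exists>R. \<forall>u. R \<le> norm u \<longrightarrow> M * norm u \<le> p1 u) \<and> (\<exists>c q. \<forall>u. c + q \<bullet> u \<le> p2 u))"
  shows "\<exists>y. \<forall>y'. a1 * p1 (y /\<^sub>R a1) + a2 * p2 ((x - y) /\<^sub>R a2) \<le> a1 * p1 (y' /\<^sub>R a1) + a2 * p2 ((x - y') /\<^sub>R a2)"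
proof -
  define G where "G y = a1 * p1 (y /\<^sub>R a1) + a2 * p2 ((x - y) /\<^sub>R a2)" for y
  have cont: "continuous_on UNIV G" unfolding G_def
    by (intro continuous_intros continuous_on_compose2[OF c1] continuous_on_compose2[OF c2]) auto
  have nx: "norm y - norm x \<le> norm (x - y)" for y
    by (metis norm_minus_commute norm_triangle_ineq2)
  have co: "\<exists>R. \<forall>y. R \<le> norm y \<longrightarrow> M \<le> G y" for M
    using cond
  proof
    assume "(\<exists>c. \<forall>u. c \<le> p1 u) \<and> (\<forall>M. \<exists>R. \<forall>u. R \<le> norm u \<longrightarrow> M \<le> p2 u)"
    then obtain c where c: "\<And>u. c \<le> p1 u" and co2: "\<And>M. \<exists>R. \<forall>u. R \<le> norm u \<longrightarrow> M \<le> p2 u" by blast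
    obtain R2 where R2: "\<And>u. R2 \<le> norm u \<Longrightarrow> (M - a1 * c) / a2 \<le> p2 u" using co2 by blast
    have "M \<le> G y" if y: "norm x + a2 * \<bar>R2\<bar> \<le> norm y" for y
    proof -
      have "a2 * \<bar>R2\<bar> \<le> norm (x - y)" using nx[of y] y by linarith
      moreover have "norm (x - y) = a2 * norm ((x - y) /\<^sub>R a2)" using a2 by simp
      ultimately have "a2 * \<bar>R2\<bar> \<le> a2 * norm ((x - y) /\<^sub>R a2)" by linarith
      then have "\<bar>R2\<bar> \<le> norm ((x - y) /\<^sub>R a2)" using a2 by (rule mult_left_le_imp_le)
      then have "(M - a1 * c) / a2 \<le> p2 ((x - y) /\<^sub>R a2)" by (intro R2) linarith
      then have A: "M - a1 * c \<le> a2 * p2 ((x - y) /\<^sub>R a2)" using a2 by (simp add: field_simps)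
      have B: "a1 * c \<le> a1 * p1 (y /\<^sub>R a1)" using c a1 by simp
      show ?thesis unfolding G_def using A B by linarith
    qed
    then show ?thesis by blast
  next
    assume "(\<forall>M. \<exists>R. \<forall>u. R \<le> norm u \<longrightarrow> M * norm u \<le> p1 u) \<and> (\<exists>c q. \<forall>u. c + q \<bullet> u \<le> p2 u)"
    then obtain c q where cq: "\<And>u. c + q \<bullet> u \<le> p2 u" and co1: "\<And>M. \<exists>R. \<forall>u. R \<le> norm u \<longrightarrow> M * norm u \<le> p1 u" by blast
    obtain R1 where R1: "\<And>u. R1 \<le> norm u \<Longrightarrow> (norm q + 1) * norm u \<le> p1 u" using co1 by blast
    have "M \<le> G y" if y: "max (a1 * R1) (M - a2 * c + norm q * norm x) \<le> norm y" for y
    proof -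
      have "R1 \<le> norm (y /\<^sub>R a1)" using y a1 by (simp add: field_simps)
      from R1[OF this] have A0: "(norm q + 1) * norm (y /\<^sub>R a1) \<le> p1 (y /\<^sub>R a1)" .
      have "a1 * ((norm q + 1) * norm (y /\<^sub>R a1)) \<le> a1 * p1 (y /\<^sub>R a1)"
        using A0 a1 by (intro mult_left_mono) auto
      moreover have "(norm q + 1) * norm y = a1 * ((norm q + 1) * norm (y /\<^sub>R a1))"
        using a1 by (simp add: field_simps)
      ultimately have A: "(norm q + 1) * norm y \<le> a1 * p1 (y /\<^sub>R a1)" by linarith
      have "c + q \<bullet> ((x - y) /\<^sub>R a2) \<le> p2 ((x - y) /\<^sub>R a2)" by (rule cq)
      then have "a2 * (c + q \<bullet> ((x - y) /\<^sub>R a2)) \<le> a2 * p2 ((x - y) /\<^sub>R a2)" using a2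
        by (intro mult_left_mono) auto
      moreover have "a2 * (c + q \<bullet> ((x - y) /\<^sub>R a2)) = a2 * c + q \<bullet> (x - y)"
        using a2 by (simp add: inner_scaleR_right distrib_left)
      ultimately have "a2 * c + q \<bullet> (x - y) \<le> a2 * p2 ((x - y) /\<^sub>R a2)" by linarith
      moreover have "q \<bullet> (x - y) \<ge> - (norm q * (norm x + norm y))"
      proof -
        have "\<bar>q \<bullet> (x - y)\<bar> \<le> norm q * norm (x - y)" by (rule Cauchy_Schwarz_ineq2)
        moreover have "norm q * norm (x - y) \<le> norm q * (norm x + norm y)"
          by (intro mult_left_mono norm_triangle_ineq4) simp
        ultimately show ?thesis by linarith
      qed
      ultimately have B: "a2 * c - norm q * norm x - norm q * norm y \<le> a2 * p2 ((x - y) /\<^sub>R a2)"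
        by (simp add: algebra_simps)
      have "G y \<ge> norm y + a2 * c - norm q * norm x" unfolding G_def using A B by (simp add: algebra_simps)
      then show ?thesis using y by linarith
    qed
    then show ?thesis by blast
  qed
  from coercive_min[OF cont co] show ?thesis unfolding G_def .
qed


lemma frechet_grad_mem:
  assumes h: "\<And>x. h x = ereal (hr x)" and d: "(hr has_derivative (\<lambda>v. D \<bullet> v)) (at x)"
  shows "D \<in> frechet_subdiff h x"
  unfolding frechet_subdiff_def
proof (intro CollectI conjI allI impI)
  show "\<bar>h x\<bar> \<noteq> \<infinity>" by (simp add: h)
  fix e :: real assume e: "e > 0"
  from d e obtain dl where dl: "dl > 0" and H: "\<And>y. norm (y - x) < dl \<Longrightarrow> norm (hr y - hr x - D \<bullet> (y - x)) \<le> e * norm (y - x)"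
    unfolding has_derivative_at_alt by blast
  show "\<exists>d>0. \<forall>y. norm (y - x) < d \<longrightarrow> h x + ereal (D \<bullet> (y - x) - e * norm (y - x)) \<le> h y"
  proof (intro exI[of _ dl] conjI allI impI dl)
    fix y assume "norm (y - x) < dl"
    from H[OF this] have "hr x + (D \<bullet> (y - x) - e * norm (y - x)) \<le> hr y" by (simp add: abs_le_iff)
    then show "h x + ereal (D \<bullet> (y - x) - e * norm (y - x)) \<le> h y" by (simp add: h)
  qed
qed

lemma frechet_grad_eq:
  assumes h: "\<And>x. h x = ereal (hr x)" and d: "(hr has_derivative (\<lambda>v. D \<bullet> v)) (at x)"
    and v: "v \<in> frechet_subdiff h x"
  shows "v = D"
proof (rule ccontr)
  assume ne: "v \<noteq> D"
  let ?n = "norm (v - D)"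
  have n: "?n > 0" using ne by simp
  define e where "e = ?n / 4"
  have e: "e > 0" using n by (simp add: e_def)
  from v e obtain d1 where d1: "d1 > 0" and H1: "\<And>y. norm (y - x) < d1 \<Longrightarrow> h x + ereal (v \<bullet> (y - x) - e * norm (y - x)) \<le> h y"
    unfolding frechet_subdiff_def by blast
  from d e obtain d2 where d2: "d2 > 0" and H2: "\<And>y. norm (y - x) < d2 \<Longrightarrow> norm (hr y - hr x - D \<bullet> (y - x)) \<le> e * norm (y - x)"
    unfolding has_derivative_at_alt by blast
  define t where "t = min d1 d2 / (2 * ?n)"
  have t: "t > 0" using d1 d2 n by (simp add: t_def)
  define y where "y = x + t *\<^sub>R (v - D)"
  have ny: "norm (y - x) = t * ?n" using t by (simp add: y_def)
  have "t * ?n = min d1 d2 / 2" using n by (simp add: t_def)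
  then have "norm (y - x) < d1" "norm (y - x) < d2" using ny d1 d2 by linarith+
  from H1[OF this(1)] have A: "hr x + (v \<bullet> (y - x) - e * norm (y - x)) \<le> hr y" by (simp add: h)
  from H2[OF \<open>norm (y - x) < d2\<close>] have B: "hr y \<le> hr x + D \<bullet> (y - x) + e * norm (y - x)" by (simp add: abs_le_iff)
  from A B have "(v - D) \<bullet> (y - x) \<le> 2 * e * norm (y - x)" by (simp add: inner_diff_left)
  moreover have "(v - D) \<bullet> (y - x) = t * ?n * ?n" by (simp add: y_def inner_scaleR_right power2_norm_eq_inner[symmetric] power2_eq_square)
  ultimately have "t * ?n * ?n \<le> t * ?n * (?n / 2)" using ny by (simp add: e_def algebra_simps)
  moreover have "t * ?n > 0" using t n by simp
  ultimately have "?n \<le> ?n / 2" by (rule mult_left_le_imp_le)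
  with n show False by simp
qed

lemma limiting_grad:
  assumes h: "\<And>x. h x = ereal (hr x)" and d: "\<And>x. (hr has_derivative (\<lambda>v. D x \<bullet> v)) (at x)"
    and c: "continuous_on UNIV D"
  shows "limiting_subdiff h x = {D x}"
proof
  show "limiting_subdiff h x \<subseteq> {D x}"
  proof
    fix v assume "v \<in> limiting_subdiff h x"
    then obtain xs vs where xs: "xs \<longlonglongrightarrow> x" and vs: "\<And>k. vs k \<in> frechet_subdiff h (xs k)" and vl: "vs \<longlonglongrightarrow> v"
      unfolding limiting_subdiff_def by blast
    have "vs = (\<lambda>k. D (xs k))" by (rule ext, rule frechet_grad_eq[OF h d vs])
    moreover have "(\<lambda>k. D (xs k)) \<longlonglongrightarrow> D x"
      using continuous_on_tendsto_compose[OF c xs] by simp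
    ultimately have "vs \<longlonglongrightarrow> D x" by simp
    with vl have "v = D x" by (rule LIMSEQ_unique)
    then show "v \<in> {D x}" by simp
  qed
  have "D x \<in> limiting_subdiff h x"
    unfolding limiting_subdiff_def
  proof (intro CollectI conjI exI)
    show "\<bar>h x\<bar> \<noteq> \<infinity>" by (simp add: h)
    show "(\<lambda>k. x) \<longlonglongrightarrow> x" "(\<lambda>k. h x) \<longlonglongrightarrow> h x" "(\<lambda>k. D x) \<longlonglongrightarrow> D x" by auto
    show "\<forall>k. D x \<in> frechet_subdiff h x" using frechet_grad_mem[OF h d] by blast
  qed
  then show "{D x} \<subseteq> limiting_subdiff h x" by simp
qed


lemma grad_cont:
  fixes Fr :: "'a::euclidean_space \<Rightarrow> real"
  assumes d: "\<And>x. (Fr has_derivative (\<lambda>h. D x \<bullet> h)) (at x)"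
    and sub: "\<And>x y. Fr x + D x \<bullet> (y - x) \<le> Fr y"
  shows "continuous_on UNIV D"
  unfolding continuous_on_iff
proof (intro ballI allI impI)
  fix x0 :: 'a and e :: real assume "x0 \<in> UNIV" and e: "e > 0"
  have e4: "e / 4 > 0" using e by simp
  from d[of x0] e4 obtain dl where dl: "dl > 0" and
    H: "\<And>y. norm (y - x0) < dl \<Longrightarrow> norm (Fr y - Fr x0 - D x0 \<bullet> (y - x0)) \<le> (e / 4) * norm (y - x0)"
    unfolding has_derivative_at_alt by blast
  show "\<exists>d>0. \<forall>x'\<in>UNIV. dist x' x0 < d \<longrightarrow> dist (D x') (D x0) < e"
  proof (intro exI[of _ "dl / 2"] conjI ballI impI)
    show "dl / 2 > 0" using dl by simp
    fix xk assume "xk \<in> UNIV" and xk: "dist xk x0 < dl / 2"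
    let ?w = "D xk - D x0"
    show "dist (D xk) (D x0) < e"
    proof (cases "?w = 0")
      case True then show ?thesis using e by simp
    next
      case False
      then have nw: "norm ?w > 0" by simp
      define t where "t = dl / 2"
      have t: "t > 0" using dl by (simp add: t_def)
      define u where "u = ?w /\<^sub>R norm ?w"
      have nu: "norm u = 1" using nw by (simp add: u_def)
      have wu: "?w \<bullet> u = norm ?w" using nw by (simp add: u_def inner_scaleR_right dot_square_norm power2_eq_square)
      define y where "y = xk + t *\<^sub>R u"
      have nxk: "norm (xk - x0) < t" using xk by (simp add: dist_norm t_def)
      have "norm (y - x0) \<le> norm (xk - x0) + norm (t *\<^sub>R u)"
        unfolding y_def by (metis add_diff_eq diff_add_eq norm_triangle_ineq add.commute)
      then have ny: "norm (y - x0) < 2 * t" using nxk nu t by simp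
      then have ny': "norm (y - x0) < dl" by (simp add: t_def)
      have s1: "Fr xk + t * (D xk \<bullet> u) \<le> Fr y" using sub[of xk y] by (simp add: y_def inner_scaleR_right)
      have s2: "Fr y \<le> Fr x0 + D x0 \<bullet> (y - x0) + (e / 4) * norm (y - x0)"
        using H[OF ny'] abs_le_iff[of "Fr y - Fr x0 - D x0 \<bullet> (y - x0)"] unfolding real_norm_def by linarith
      have s3: "Fr x0 + D x0 \<bullet> (xk - x0) \<le> Fr xk" by (rule sub)
      have eqy: "D x0 \<bullet> (y - x0) = D x0 \<bullet> (xk - x0) + t * (D x0 \<bullet> u)"
        by (simp add: y_def inner_diff_right inner_add_right inner_scaleR_right)
      have "(e / 4) * norm (y - x0) \<le> (e / 4) * (2 * t)" using ny e by (intro mult_left_mono) auto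
      with s1 s2 s3 eqy have "t * (D xk \<bullet> u) - t * (D x0 \<bullet> u) \<le> (e / 4) * (2 * t)" by linarith
      then have "t * (?w \<bullet> u) \<le> t * (e / 2)" by (simp add: inner_diff_left algebra_simps)
      then have "norm ?w \<le> e / 2" using t wu by simp
      then show ?thesis using e by (simp add: dist_norm)
    qed
  qed
qed

lemma squeeze_deriv:
  fixes F f :: "'a::euclidean_space \<Rightarrow> real"
  assumes lower: "\<And>y. F x + g \<bullet> (y - x) \<le> F y"
    and upper: "\<And>d. F (x + d) \<le> F x + a * (f (u + d /\<^sub>R a) - f u)"
    and a: "a > 0" and df: "(f has_derivative (\<lambda>h. g \<bullet> h)) (at u)"
  shows "(F has_derivative (\<lambda>h. g \<bullet> h)) (at x)"
  unfolding has_derivative_at_alt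
proof (intro conjI allI impI)
  show "bounded_linear ((\<bullet>) g)" by (rule bounded_linear_inner_right)
  fix e :: real assume e: "e > 0"
  from df e obtain dl where dl: "dl > 0" and
    H: "\<And>v. norm (v - u) < dl \<Longrightarrow> norm (f v - f u - g \<bullet> (v - u)) \<le> e * norm (v - u)"
    unfolding has_derivative_at_alt by blast
  show "\<exists>d>0. \<forall>y. norm (y - x) < d \<longrightarrow> norm (F y - F x - g \<bullet> (y - x)) \<le> e * norm (y - x)"
  proof (intro exI[of _ "a * dl"] conjI allI impI)
    show "a * dl > 0" using a dl by simp
    fix y assume y: "norm (y - x) < a * dl"
    let ?d = "y - x"
    have nv: "norm ((u + ?d /\<^sub>R a) - u) = norm ?d / a" using a by (simp add: divide_inverse mult.commute)
    have "norm ((u + ?d /\<^sub>R a) - u) < dl" unfolding nv using y a by (simp add: pos_divide_less_eq mult.commute)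
    from H[OF this] have "f (u + ?d /\<^sub>R a) - f u \<le> g \<bullet> (?d /\<^sub>R a) + e * (norm ?d / a)"
      using nv by (simp add: abs_le_iff)
    then have "a * (f (u + ?d /\<^sub>R a) - f u) \<le> a * (g \<bullet> (?d /\<^sub>R a) + e * (norm ?d / a))"
      using a by (intro mult_left_mono) auto
    also have "\<dots> = g \<bullet> ?d + e * norm ?d" using a by (simp add: inner_scaleR_right distrib_left)
    finally have up: "F y \<le> F x + g \<bullet> ?d + e * norm ?d" using upper[of ?d] by simp
    have lo: "F x + g \<bullet> ?d \<le> F y" by (rule lower)
    show "norm (F y - F x - g \<bullet> ?d) \<le> e * norm ?d" using up lo by (simp add: abs_le_iff)
  qed
qed


lemma deriv_cont:
  assumes "\<And>x. (f has_derivative f' x) (at x)"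
  shows "continuous_on UNIV f"
  using assms has_derivative_continuous by (blast intro: continuous_at_imp_continuous_on)

lemma INF_attained:
  fixes G :: "'a \<Rightarrow> real"
  assumes "\<And>y'. G y \<le> G y'"
  shows "(INF y'. ereal (G y')) = ereal (G y)"
proof (rule antisym)
  show "(INF y'. ereal (G y')) \<le> ereal (G y)" by (rule INF_lower) simp
  show "ereal (G y) \<le> (INF y'. ereal (G y'))" using assms by (intro INF_greatest) simp
qed

lemma scaled_tan:
  fixes p :: "'a::euclidean_space \<Rightarrow> real"
  assumes a: "a > 0" and tan: "\<And>w. p z + g \<bullet> (w - z) \<le> p w"
  shows "a * p z + g \<bullet> (v - a *\<^sub>R z) \<le> a * p (v /\<^sub>R a)"
proof -
  have "a * (p z + g \<bullet> (v /\<^sub>R a - z)) \<le> a * p (v /\<^sub>R a)" using tan a by (intro mult_left_mono) auto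
  moreover have "a * (p z + g \<bullet> (v /\<^sub>R a - z)) = a * p z + g \<bullet> (v - a *\<^sub>R z)"
    using a by (simp add: inner_diff_right inner_scaleR_right distrib_left right_diff_distrib)
  ultimately show ?thesis by simp
qed

lemma opt_cond:
  fixes p1 p2 :: "'a::euclidean_space \<Rightarrow> real"
  assumes a1: "a1 > 0" and a2: "a2 > 0"
    and d1: "(p1 has_derivative (\<lambda>h. D1 \<bullet> h)) (at (y /\<^sub>R a1))"
    and d2: "(p2 has_derivative (\<lambda>h. D2 \<bullet> h)) (at ((x - y) /\<^sub>R a2))"
    and m: "\<And>y'. a1 * p1 (y /\<^sub>R a1) + a2 * p2 ((x - y) /\<^sub>R a2) \<le> a1 * p1 (y' /\<^sub>R a1) + a2 * p2 ((x - y') /\<^sub>R a2)"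
  shows "D1 = D2"
proof -
  have i1: "((\<lambda>y. y /\<^sub>R a1) has_derivative (\<lambda>h. h /\<^sub>R a1)) (at y)"
    by (intro bounded_linear_imp_has_derivative bounded_linear_scaleR_right)
  have i2: "((\<lambda>y. (x - y) /\<^sub>R a2) has_derivative (\<lambda>h. (0 - h) /\<^sub>R a2)) (at y)"
    by (intro has_derivative_scaleR_right has_derivative_diff has_derivative_const has_derivative_ident)
  have c1: "((\<lambda>y. p1 (y /\<^sub>R a1)) has_derivative (\<lambda>h. D1 \<bullet> (h /\<^sub>R a1))) (at y)"
    using has_derivative_compose[OF i1 d1] by simp
  have c2: "((\<lambda>y. p2 ((x - y) /\<^sub>R a2)) has_derivative (\<lambda>h. D2 \<bullet> ((0 - h) /\<^sub>R a2))) (at y)"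
    using has_derivative_compose[OF i2 d2] by simp
  have "((\<lambda>y. a1 * p1 (y /\<^sub>R a1) + a2 * p2 ((x - y) /\<^sub>R a2)) has_derivative
         (\<lambda>h. a1 * (D1 \<bullet> (h /\<^sub>R a1)) + a2 * (D2 \<bullet> ((0 - h) /\<^sub>R a2)))) (at y)"
    by (intro has_derivative_add has_derivative_mult_right c1 c2)
  then have "((\<lambda>y. a1 * p1 (y /\<^sub>R a1) + a2 * p2 ((x - y) /\<^sub>R a2)) has_derivative (\<lambda>h. (D1 - D2) \<bullet> h)) (at y)"
    by (rule has_derivative_eq_rhs) (use a1 a2 in \<open>auto simp: inner_scaleR_right inner_diff_left mult.assoc[symmetric]\<close>)
  from min_grad_zero[OF this m] show ?thesis by simp
qed

lemma ref_conj_inv: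
  assumes r: "reference_fun \<phi>"
  shows "grad \<phi> (grad (conj_fun \<phi>) g) = g"
proof -
  obtain w where w: "grad \<phi> w = g" using ref_surj[OF r] by blast
  have "grad (conj_fun \<phi>) g = w"
    using conj_grad[of \<phi> w g] ref_tan[OF r, of w] ref_grow[OF r, of _ w] w by auto
  with w show ?thesis by simp
qed


lemma infconv_conj:
  fixes \<phi>1 \<phi>2 \<Phi> :: "'a::euclidean_space \<Rightarrow> real"
  assumes a1: "a1 > 0" and a2: "a2 > 0"
    and tan1: "\<And>v. \<phi>1 W1 + g \<bullet> (v - W1) \<le> \<phi>1 v" and tan2: "\<And>v. \<phi>2 W2 + g \<bullet> (v - W2) \<le> \<phi>2 v"
    and grow1: "\<And>\<epsilon>. \<epsilon> > 0 \<Longrightarrow> \<exists>\<delta>>0. \<forall>v. \<epsilon> \<le> norm (v - W1) \<longrightarrow> \<phi>1 W1 + g \<bullet> (v - W1) + \<delta> * norm (v - W1) \<le> \<phi>1 v"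
    and grow2: "\<And>\<epsilon>. \<epsilon> > 0 \<Longrightarrow> \<exists>\<delta>>0. \<forall>v. \<epsilon> \<le> norm (v - W2) \<longrightarrow> \<phi>2 W2 + g \<bullet> (v - W2) + \<delta> * norm (v - W2) \<le> \<phi>2 v"
    and le: "\<And>x s. \<Phi> x \<le> a1 * \<phi>1 (s /\<^sub>R a1) + a2 * \<phi>2 ((x - s) /\<^sub>R a2)"
    and att: "\<And>x. \<exists>s. \<Phi> x = a1 * \<phi>1 (s /\<^sub>R a1) + a2 * \<phi>2 ((x - s) /\<^sub>R a2)"
  shows "\<Phi> (a1 *\<^sub>R W1 + a2 *\<^sub>R W2) = a1 * \<phi>1 W1 + a2 * \<phi>2 W2"
    and "\<And>w. \<Phi> (a1 *\<^sub>R W1 + a2 *\<^sub>R W2) + g \<bullet> (w - (a1 *\<^sub>R W1 + a2 *\<^sub>R W2)) \<le> \<Phi> w"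
    and "grad (conj_fun \<Phi>) g = a1 *\<^sub>R W1 + a2 *\<^sub>R W2"
proof -
  define Z where "Z = a1 *\<^sub>R W1 + a2 *\<^sub>R W2"
  define b where "b = a1 * \<phi>1 W1 + a2 * \<phi>2 W2"
  have vec: "w - Z = a1 *\<^sub>R (s /\<^sub>R a1 - W1) + a2 *\<^sub>R ((w - s) /\<^sub>R a2 - W2)" for w s
    using a1 a2 by (simp add: Z_def algebra_simps)
  have id1: "g \<bullet> (w - Z) = a1 * (g \<bullet> (s /\<^sub>R a1 - W1)) + a2 * (g \<bullet> ((w - s) /\<^sub>R a2 - W2))" for w s
    by (subst vec[of w s]) (simp add: inner_add_right inner_scaleR_right)
  have base: "b + g \<bullet> (w - Z) + a1 * ra + a2 * rb \<le> a1 * \<phi>1 (s /\<^sub>R a1) + a2 * \<phi>2 ((w - s) /\<^sub>R a2)"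
    if "\<phi>1 W1 + g \<bullet> (s /\<^sub>R a1 - W1) + ra \<le> \<phi>1 (s /\<^sub>R a1)"
       "\<phi>2 W2 + g \<bullet> ((w - s) /\<^sub>R a2 - W2) + rb \<le> \<phi>2 ((w - s) /\<^sub>R a2)" for w s ra rb
  proof -
    have "a1 * (\<phi>1 W1 + g \<bullet> (s /\<^sub>R a1 - W1) + ra) \<le> a1 * \<phi>1 (s /\<^sub>R a1)"
      using that(1) a1 by (intro mult_left_mono) auto
    moreover have "a2 * (\<phi>2 W2 + g \<bullet> ((w - s) /\<^sub>R a2 - W2) + rb) \<le> a2 * \<phi>2 ((w - s) /\<^sub>R a2)"
      using that(2) a2 by (intro mult_left_mono) auto
    ultimately show ?thesis unfolding id1[of w s] b_def by (simp add: distrib_left)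
  qed
  have lowall: "b + g \<bullet> (w - Z) \<le> a1 * \<phi>1 (s /\<^sub>R a1) + a2 * \<phi>2 ((w - s) /\<^sub>R a2)" for w s
    using base[where w=w and s=s and ra=0 and rb=0] tan1[of "s /\<^sub>R a1"] tan2[of "(w - s) /\<^sub>R a2"] by simp
  have PZ: "\<Phi> Z = b"
  proof (rule antisym)
    have "\<Phi> Z \<le> a1 * \<phi>1 ((a1 *\<^sub>R W1) /\<^sub>R a1) + a2 * \<phi>2 ((Z - a1 *\<^sub>R W1) /\<^sub>R a2)" by (rule le)
    then show "\<Phi> Z \<le> b" using a1 a2 by (simp add: Z_def b_def)
    obtain s where "\<Phi> Z = a1 * \<phi>1 (s /\<^sub>R a1) + a2 * \<phi>2 ((Z - s) /\<^sub>R a2)" using att by blast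
    with lowall[of Z s] show "b \<le> \<Phi> Z" by simp
  qed
  have tanP: "\<Phi> Z + g \<bullet> (w - Z) \<le> \<Phi> w" for w
  proof -
    obtain s where "\<Phi> w = a1 * \<phi>1 (s /\<^sub>R a1) + a2 * \<phi>2 ((w - s) /\<^sub>R a2)" using att by blast
    with lowall[of w s] PZ show ?thesis by simp
  qed
  have growP: "\<exists>\<delta>>0. \<forall>w. \<epsilon> \<le> norm (w - Z) \<longrightarrow> \<Phi> Z + g \<bullet> (w - Z) + \<delta> * norm (w - Z) \<le> \<Phi> w"
    if e: "\<epsilon> > 0" for \<epsilon>
  proof -
    define A where "A = a1 + a2"
    have A: "A > 0" using a1 a2 by (simp add: A_def)
    have e': "\<epsilon> / A > 0" using e A by simp
    obtain \<delta>1 where d1: "\<delta>1 > 0" and G1: "\<And>v. \<epsilon> / A \<le> norm (v - W1) \<Longrightarrow> \<phi>1 W1 + g \<bullet> (v - W1) + \<delta>1 * norm (v - W1) \<le> \<phi>1 v"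
      using grow1[OF e'] by blast
    obtain \<delta>2 where d2: "\<delta>2 > 0" and G2: "\<And>v. \<epsilon> / A \<le> norm (v - W2) \<Longrightarrow> \<phi>2 W2 + g \<bullet> (v - W2) + \<delta>2 * norm (v - W2) \<le> \<phi>2 v"
      using grow2[OF e'] by blast
    define \<delta> where "\<delta> = min (a1 * \<delta>1) (a2 * \<delta>2) / A"
    have d: "\<delta> > 0" using a1 a2 d1 d2 A by (simp add: \<delta>_def)
    have "\<Phi> Z + g \<bullet> (w - Z) + \<delta> * norm (w - Z) \<le> \<Phi> w" if w: "\<epsilon> \<le> norm (w - Z)" for w
    proof -
      obtain s where s: "\<Phi> w = a1 * \<phi>1 (s /\<^sub>R a1) + a2 * \<phi>2 ((w - s) /\<^sub>R a2)" using att by blast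
      define n1 where "n1 = norm (s /\<^sub>R a1 - W1)"
      define n2 where "n2 = norm ((w - s) /\<^sub>R a2 - W2)"
      have nwz: "norm (w - Z) \<le> a1 * n1 + a2 * n2"
        unfolding n1_def n2_def using a1 a2 vec[of w s]
        by (metis (no_types, lifting) abs_of_pos norm_scaleR norm_triangle_ineq)
      show ?thesis
      proof (cases "n2 \<le> n1")
        case True
        have "a1 * n1 + a2 * n2 \<le> A * n1" using True a2 by (simp add: A_def distrib_right mult_left_mono)
        with nwz have N: "norm (w - Z) \<le> A * n1" by linarith
        then have "\<epsilon> / A \<le> n1" using w A by (simp add: divide_le_eq mult.commute)
        then have "\<phi>1 W1 + g \<bullet> (s /\<^sub>R a1 - W1) + \<delta>1 * n1 \<le> \<phi>1 (s /\<^sub>R a1)" using G1 unfolding n1_def by blast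
        from base[OF this, where rb=0] tan2[of "(w - s) /\<^sub>R a2"] have B: "b + g \<bullet> (w - Z) + a1 * (\<delta>1 * n1) \<le> \<Phi> w" using s by simp
        have "\<delta> * norm (w - Z) \<le> (a1 * \<delta>1 / A) * norm (w - Z)"
          by (intro mult_right_mono) (use A in \<open>auto simp: \<delta>_def intro!: divide_right_mono\<close>)
        also have "\<dots> \<le> (a1 * \<delta>1 / A) * (A * n1)" using N a1 d1 A by (intro mult_left_mono) auto
        also have "\<dots> = a1 * (\<delta>1 * n1)" using A by simp
        finally show ?thesis using B PZ by linarith
      next
        case False
        have "a1 * n1 + a2 * n2 \<le> A * n2" using False a1 by (simp add: A_def distrib_right mult_left_mono)
        with nwz have N: "norm (w - Z) \<le> A * n2" by linarith
        then have "\<epsilon> / A \<le> n2" using w A by (simp add: divide_le_eq mult.commute)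
        then have "\<phi>2 W2 + g \<bullet> ((w - s) /\<^sub>R a2 - W2) + \<delta>2 * n2 \<le> \<phi>2 ((w - s) /\<^sub>R a2)" using G2 unfolding n2_def by blast
        from base[OF _ this, where ra=0] tan1[of "s /\<^sub>R a1"] have B: "b + g \<bullet> (w - Z) + a2 * (\<delta>2 * n2) \<le> \<Phi> w" using s by simp
        have "\<delta> * norm (w - Z) \<le> (a2 * \<delta>2 / A) * norm (w - Z)"
          by (intro mult_right_mono) (use A in \<open>auto simp: \<delta>_def intro!: divide_right_mono\<close>)
        also have "\<dots> \<le> (a2 * \<delta>2 / A) * (A * n2)" using N a2 d2 A by (intro mult_left_mono) auto
        also have "\<dots> = a2 * (\<delta>2 * n2)" using A by simp
        finally show ?thesis using B PZ by linarith
      qed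
    qed
    with d show ?thesis by blast
  qed
  show "\<Phi> (a1 *\<^sub>R W1 + a2 *\<^sub>R W2) = a1 * \<phi>1 W1 + a2 * \<phi>2 W2" using PZ by (simp add: Z_def b_def)
  show "\<And>w. \<Phi> (a1 *\<^sub>R W1 + a2 *\<^sub>R W2) + g \<bullet> (w - (a1 *\<^sub>R W1 + a2 *\<^sub>R W2)) \<le> \<Phi> w"
    using tanP by (simp add: Z_def)
  show "grad (conj_fun \<Phi>) g = a1 *\<^sub>R W1 + a2 *\<^sub>R W2"
    using conj_grad[of \<Phi> Z g] tanP growP by (simp add: Z_def)
qed


lemma smooth_facts:
  fixes f :: "'a::euclidean_space \<Rightarrow> ereal"
  assumes sm: "a_smooth_rel \<phi> f" and cv: "convex_fun f"
  obtains fr G where "\<And>x. f x = ereal (fr x)" "\<And>x. (fr has_derivative (\<lambda>h. G x \<bullet> h)) (at x)"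
    "continuous_on UNIV G" "\<And>z w. fr z + G z \<bullet> (w - z) \<le> fr w"
    "\<And>u w. fr w \<le> fr u + \<phi> (w - u + grad (conj_fun \<phi>) (G u)) - \<phi> (grad (conj_fun \<phi>) (G u))"
proof -
  define fr where "fr = (\<lambda>y. real_of_ereal (f y))"
  have hf: "\<And>x. f x = ereal (fr x)"
    using sm unfolding a_smooth_rel_def fr_def by (simp add: ereal_real')
  obtain G where dG: "\<And>x. (fr has_derivative (\<lambda>h. G x \<bullet> h)) (at x)" and cG: "continuous_on UNIV G"
    using sm unfolding a_smooth_rel_def fr_def by blast
  have cvx: "\<And>x y t. 0 < t \<Longrightarrow> t < 1 \<Longrightarrow> fr ((1 - t) *\<^sub>R x + t *\<^sub>R y) \<le> (1 - t) * fr x + t * fr y"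
    using cv unfolding convex_fun_def by (simp add: hf)
  have tan: "\<And>z w. fr z + G z \<bullet> (w - z) \<le> fr w" using tangent_ineq[OF cvx dG] .
  have up: "fr w \<le> fr u + \<phi> (w - u + grad (conj_fun \<phi>) (G u)) - \<phi> (grad (conj_fun \<phi>) (G u))" for u w
  proof -
    have dm: "((\<lambda>x. - fr x) has_derivative (\<lambda>h. (- G x) \<bullet> h)) (at x)" for x
      using has_derivative_minus[OF dG[of x]] by simp
    have "limiting_subdiff (\<lambda>x. - f x) u = {- G u}"
      by (rule limiting_grad[where hr="\<lambda>x. - fr x"]) (auto simp: hf intro: has_derivative_minus[OF dG] continuous_on_minus[OF cG])
    then have "- G u \<in> limiting_subdiff (\<lambda>x. - f x) u" by simp
    with sm have "- f w \<ge> - f u - ereal (\<phi> (w - u + grad (conj_fun \<phi>) (- (- G u)))) + ereal (\<phi> (grad (conj_fun \<phi>) (- (- G u))))"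
      unfolding a_smooth_rel_def a_weakly_convex_rel_def by blast
    then show ?thesis by (simp add: hf)
  qed
  show ?thesis using that hf dG cG tan up by blast
qed

theorem mainTheorem14:
  fixes \<phi>1 \<phi>2 :: "'a::euclidean_space \<Rightarrow> real"
    and f1 f2 :: "'a \<Rightarrow> ereal"
    and a1 a2 :: real
  assumes ref1: "reference_fun \<phi>1" and ref2: "reference_fun \<phi>2"
    and f1: "proper_fun f1" "lsc_fun f1" "convex_fun f1" "a_smooth_rel \<phi>1 f1"
    and f2: "proper_fun f2" "lsc_fun f2" "convex_fun f2" "a_smooth_rel \<phi>2 f2"
    and a: "a1 > 0" "a2 > 0"
    and growth: "(bounded_below_fun f1 \<and> coercive_fun f2) \<or> (bounded_below_fun f2 \<and> coercive_fun f1)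
                 \<or> supercoercive_fun f1 \<or> supercoercive_fun f2"
  shows "a_smooth_rel
           (\<lambda>x. real_of_ereal (infconv (epi_scale a1 (\<lambda>y. ereal (\<phi>1 y)))
                                        (epi_scale a2 (\<lambda>y. ereal (\<phi>2 y))) x))
           (infconv (epi_scale a1 f1) (epi_scale a2 f2))"
proof -
  obtain fr1 G1 where hf1: "\<And>x. f1 x = ereal (fr1 x)" and dG1: "\<And>x. (fr1 has_derivative (\<lambda>h. G1 x \<bullet> h)) (at x)"
    and cG1: "continuous_on UNIV G1" and tan1: "\<And>z w. fr1 z + G1 z \<bullet> (w - z) \<le> fr1 w"
    and up1: "\<And>u w. fr1 w \<le> fr1 u + \<phi>1 (w - u + grad (conj_fun \<phi>1) (G1 u)) - \<phi>1 (grad (conj_fun \<phi>1) (G1 u))"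
    using smooth_facts[OF f1(4) f1(3)] by blast
  obtain fr2 G2 where hf2: "\<And>x. f2 x = ereal (fr2 x)" and dG2: "\<And>x. (fr2 has_derivative (\<lambda>h. G2 x \<bullet> h)) (at x)"
    and cG2: "continuous_on UNIV G2" and tan2: "\<And>z w. fr2 z + G2 z \<bullet> (w - z) \<le> fr2 w"
    and up2: "\<And>u w. fr2 w \<le> fr2 u + \<phi>2 (w - u + grad (conj_fun \<phi>2) (G2 u)) - \<phi>2 (grad (conj_fun \<phi>2) (G2 u))"
    using smooth_facts[OF f2(4) f2(3)] by blast
  have ef1: "f1 = (\<lambda>x. ereal (fr1 x))" and ef2: "f2 = (\<lambda>x. ereal (fr2 x))" using hf1 hf2 by auto
  have cf1: "continuous_on UNIV fr1" by (rule deriv_cont[OF dG1])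
  have cf2: "continuous_on UNIV fr2" by (rule deriv_cont[OF dG2])
  have aff1: "\<exists>c q. \<forall>u. c + q \<bullet> u \<le> fr1 u" using tan1[of 0] by auto
  have aff2: "\<exists>c q. \<forall>u. c + q \<bullet> u \<le> fr2 u" using tan2[of 0] by auto
  have bb1: "bounded_below_fun f1 \<Longrightarrow> \<exists>c. \<forall>u. c \<le> fr1 u" unfolding bounded_below_fun_def by (simp add: hf1)
  have bb2: "bounded_below_fun f2 \<Longrightarrow> \<exists>c. \<forall>u. c \<le> fr2 u" unfolding bounded_below_fun_def by (simp add: hf2)
  have co1: "coercive_fun f1 \<Longrightarrow> \<forall>M. \<exists>R. \<forall>u. R \<le> norm u \<longrightarrow> M \<le> fr1 u" using coercive_real[of fr1] ef1 by auto
  have co2: "coercive_fun f2 \<Longrightarrow> \<forall>M. \<exists>R. \<forall>u. R \<le> norm u \<longrightarrow> M \<le> fr2 u" using coercive_real[of fr2] ef2 by auto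
  have sc1: "supercoercive_fun f1 \<Longrightarrow> \<forall>M. \<exists>R. \<forall>u. R \<le> norm u \<longrightarrow> M * norm u \<le> fr1 u" using supercoercive_real[of fr1] ef1 by auto
  have sc2: "supercoercive_fun f2 \<Longrightarrow> \<forall>M. \<exists>R. \<forall>u. R \<le> norm u \<longrightarrow> M * norm u \<le> fr2 u" using supercoercive_real[of fr2] ef2 by auto
  define Gx where "Gx x y = a1 * fr1 (y /\<^sub>R a1) + a2 * fr2 ((x - y) /\<^sub>R a2)" for x y
  have attF: "\<exists>y. \<forall>y'. Gx x y \<le> Gx x y'" for x
  proof -
    have c12: "((\<exists>c. \<forall>u. c \<le> fr1 u) \<and> (\<forall>M. \<exists>R. \<forall>u. R \<le> norm u \<longrightarrow> M \<le> fr2 u))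
       \<or> ((\<forall>M. \<exists>R. \<forall>u. R \<le> norm u \<longrightarrow> M * norm u \<le> fr1 u) \<and> (\<exists>c q. \<forall>u. c + q \<bullet> u \<le> fr2 u))
      \<Longrightarrow> ?thesis"
      using attain[OF cf1 cf2 a(1) a(2), of x] unfolding Gx_def by blast
    have c21: "((\<exists>c. \<forall>u. c \<le> fr2 u) \<and> (\<forall>M. \<exists>R. \<forall>u. R \<le> norm u \<longrightarrow> M \<le> fr1 u))
       \<or> ((\<forall>M. \<exists>R. \<forall>u. R \<le> norm u \<longrightarrow> M * norm u \<le> fr2 u) \<and> (\<exists>c q. \<forall>u. c + q \<bullet> u \<le> fr1 u))
      \<Longrightarrow> ?thesis"
    proof -
      assume h: "((\<exists>c. \<forall>u. c \<le> fr2 u) \<and> (\<forall>M. \<exists>R. \<forall>u. R \<le> norm u \<longrightarrow> M \<le> fr1 u))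
       \<or> ((\<forall>M. \<exists>R. \<forall>u. R \<le> norm u \<longrightarrow> M * norm u \<le> fr2 u) \<and> (\<exists>c q. \<forall>u. c + q \<bullet> u \<le> fr1 u))"
      obtain y where y: "\<And>y'. a2 * fr2 (y /\<^sub>R a2) + a1 * fr1 ((x - y) /\<^sub>R a1) \<le> a2 * fr2 (y' /\<^sub>R a2) + a1 * fr1 ((x - y') /\<^sub>R a1)"
        using attain[OF cf2 cf1 a(2) a(1) h, of x] by blast
      have "Gx x (x - y) \<le> Gx x y'" for y'
        using y[of "x - y'"] unfolding Gx_def by simp
      then show ?thesis by blast
    qed
    show ?thesis using growth c12 c21 bb1 bb2 co1 co2 sc1 sc2 aff1 aff2 by blast
  qed
  define ys where "ys x = (SOME y. \<forall>y'. Gx x y \<le> Gx x y')" for x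
  have ys: "Gx x (ys x) \<le> Gx x y'" for x y' using someI_ex[OF attF[of x]] unfolding ys_def by blast
  define Fr where "Fr x = Gx x (ys x)" for x
  define Fe where "Fe = infconv (epi_scale a1 f1) (epi_scale a2 f2)"
  have F_eq: "Fe x = ereal (Fr x)" for x
  proof -
    have eq: "(\<lambda>y. ereal a1 * f1 (y /\<^sub>R a1) + ereal a2 * f2 ((x - y) /\<^sub>R a2)) = (\<lambda>y. ereal (Gx x y))"
      by (simp add: hf1 hf2 Gx_def)
    show ?thesis unfolding Fe_def infconv_def epi_scale_def Fr_def eq by (rule INF_attained[of "Gx x" "ys x", OF ys[of x]])
  qed
  define u1 where "u1 x = ys x /\<^sub>R a1" for x
  define u2 where "u2 x = (x - ys x) /\<^sub>R a2" for x
  define Dg where "Dg x = G1 (u1 x)" for x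
  have opt: "G1 (u1 x) = G2 (u2 x)" for x
    unfolding u1_def u2_def by (rule opt_cond[OF a(1) a(2) dG1 dG2]) (use ys in \<open>simp add: Gx_def\<close>)
  have Fr_val: "Fr x = a1 * fr1 (u1 x) + a2 * fr2 (u2 x)" for x by (simp add: Fr_def Gx_def u1_def u2_def)
  have e1: "a1 *\<^sub>R u1 x = ys x" for x using a by (simp add: u1_def)
  have e2: "a2 *\<^sub>R u2 x = x - ys x" for x using a by (simp add: u2_def)
  have low: "Fr x + Dg x \<bullet> (y - x) \<le> Fr y" for x y
  proof -
    let ?s = "ys y"
    have A: "a1 * fr1 (u1 x) + Dg x \<bullet> (?s - a1 *\<^sub>R u1 x) \<le> a1 * fr1 (?s /\<^sub>R a1)"
      by (rule scaled_tan[OF a(1)]) (simp add: Dg_def tan1)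
    have B: "a2 * fr2 (u2 x) + Dg x \<bullet> ((y - ?s) - a2 *\<^sub>R u2 x) \<le> a2 * fr2 ((y - ?s) /\<^sub>R a2)"
      by (rule scaled_tan[OF a(2)]) (simp add: Dg_def opt tan2)
    have C: "Dg x \<bullet> (?s - ys x) + Dg x \<bullet> ((y - ?s) - (x - ys x)) = Dg x \<bullet> (y - x)"
      by (simp add: inner_add_right[symmetric])
    have "Fr y = a1 * fr1 (?s /\<^sub>R a1) + a2 * fr2 ((y - ?s) /\<^sub>R a2)" by (simp add: Fr_def Gx_def)
    with A B C show ?thesis unfolding e1 e2 Fr_val[of x] by linarith
  qed
  have dF: "(Fr has_derivative (\<lambda>h. Dg x \<bullet> h)) (at x)" for x
  proof (rule squeeze_deriv[OF low[of x] _ a(1)])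
    show "(fr1 has_derivative (\<lambda>h. Dg x \<bullet> h)) (at (u1 x))" unfolding Dg_def by (rule dG1)
    fix d
    have "Fr (x + d) \<le> Gx (x + d) (ys x + d)" unfolding Fr_def by (rule ys)
    also have "\<dots> = a1 * fr1 (u1 x + d /\<^sub>R a1) + a2 * fr2 (u2 x)"
      by (simp add: Gx_def u1_def u2_def scaleR_add_right)
    finally show "Fr (x + d) \<le> Fr x + a1 * (fr1 (u1 x + d /\<^sub>R a1) - fr1 (u1 x))"
      unfolding Fr_val[of x] by (simp add: right_diff_distrib)
  qed
  have cDg: "continuous_on UNIV Dg" by (rule grad_cont[OF dF low])
  define \<Phi> where "\<Phi> = (\<lambda>x. real_of_ereal (infconv (epi_scale a1 (\<lambda>y. ereal (\<phi>1 y))) (epi_scale a2 (\<lambda>y. ereal (\<phi>2 y))) x))"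
  define Hx where "Hx x s = a1 * \<phi>1 (s /\<^sub>R a1) + a2 * \<phi>2 ((x - s) /\<^sub>R a2)" for x s
  have P_eq: "\<exists>s. \<Phi> x = Hx x s \<and> (\<forall>s'. \<Phi> x \<le> Hx x s')" for x
  proof -
    have scp: "\<forall>M. \<exists>R. \<forall>u. R \<le> norm u \<longrightarrow> M * norm u \<le> \<phi>1 u"
      using supercoercive_real[of \<phi>1] ref1 unfolding reference_fun_def by auto
    have afp: "\<exists>c q. \<forall>u. c + q \<bullet> u \<le> \<phi>2 u" using ref_tan[OF ref2, of 0] by auto
    obtain s where s: "\<And>s'. Hx x s \<le> Hx x s'"
      using attain[OF ref_cont[OF ref1] ref_cont[OF ref2] a(1) a(2), of x] scp afp unfolding Hx_def by blast
    have eq: "(\<lambda>y. ereal a1 * ereal (\<phi>1 (y /\<^sub>R a1)) + ereal a2 * ereal (\<phi>2 ((x - y) /\<^sub>R a2))) = (\<lambda>y. ereal (Hx x y))"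
      by (simp add: Hx_def)
    have "\<Phi> x = Hx x s" unfolding \<Phi>_def infconv_def epi_scale_def eq INF_attained[of "Hx x" s, OF s] by simp
    with s show ?thesis by auto
  qed
  have P_le: "\<Phi> x \<le> Hx x s" for x s using P_eq[of x] by auto
  have P_att: "\<exists>s. \<Phi> x = Hx x s" for x using P_eq[of x] by auto
  have PC: "\<Phi> (a1 *\<^sub>R grad (conj_fun \<phi>1) g + a2 *\<^sub>R grad (conj_fun \<phi>2) g) = a1 * \<phi>1 (grad (conj_fun \<phi>1) g) + a2 * \<phi>2 (grad (conj_fun \<phi>2) g)
     \<and> (\<forall>w. \<Phi> (a1 *\<^sub>R grad (conj_fun \<phi>1) g + a2 *\<^sub>R grad (conj_fun \<phi>2) g) + g \<bullet> (w - (a1 *\<^sub>R grad (conj_fun \<phi>1) g + a2 *\<^sub>R grad (conj_fun \<phi>2) g)) \<le> \<Phi> w)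
     \<and> grad (conj_fun \<Phi>) g = a1 *\<^sub>R grad (conj_fun \<phi>1) g + a2 *\<^sub>R grad (conj_fun \<phi>2) g" for g
  proof -
    let ?W1 = "grad (conj_fun \<phi>1) g" and ?W2 = "grad (conj_fun \<phi>2) g"
    have g1: "grad \<phi>1 ?W1 = g" by (rule ref_conj_inv[OF ref1])
    have g2: "grad \<phi>2 ?W2 = g" by (rule ref_conj_inv[OF ref2])
    note R = infconv_conj[OF a(1) a(2), of \<phi>1 ?W1 g \<phi>2 ?W2 \<Phi>]
    have t1: "\<And>v. \<phi>1 ?W1 + g \<bullet> (v - ?W1) \<le> \<phi>1 v" using ref_tan[OF ref1, of ?W1] g1 by simp
    have t2: "\<And>v. \<phi>2 ?W2 + g \<bullet> (v - ?W2) \<le> \<phi>2 v" using ref_tan[OF ref2, of ?W2] g2 by simp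
    have gr1: "\<And>\<epsilon>. \<epsilon> > 0 \<Longrightarrow> \<exists>\<delta>>0. \<forall>v. \<epsilon> \<le> norm (v - ?W1) \<longrightarrow> \<phi>1 ?W1 + g \<bullet> (v - ?W1) + \<delta> * norm (v - ?W1) \<le> \<phi>1 v"
      using ref_grow[OF ref1, of _ ?W1] g1 by simp
    have gr2: "\<And>\<epsilon>. \<epsilon> > 0 \<Longrightarrow> \<exists>\<delta>>0. \<forall>v. \<epsilon> \<le> norm (v - ?W2) \<longrightarrow> \<phi>2 ?W2 + g \<bullet> (v - ?W2) + \<delta> * norm (v - ?W2) \<le> \<phi>2 v"
      using ref_grow[OF ref2, of _ ?W2] g2 by simp
    have le: "\<And>x s. \<Phi> x \<le> a1 * \<phi>1 (s /\<^sub>R a1) + a2 * \<phi>2 ((x - s) /\<^sub>R a2)" using P_le unfolding Hx_def .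
    have att: "\<And>x. \<exists>s. \<Phi> x = a1 * \<phi>1 (s /\<^sub>R a1) + a2 * \<phi>2 ((x - s) /\<^sub>R a2)" using P_att unfolding Hx_def .
    show ?thesis using R[OF t1 t2 gr1 gr2 le att] by blast
  qed
  have main: "a_smooth_rel \<Phi> Fe"
    unfolding a_smooth_rel_def
  proof (intro conjI)
    show "\<forall>x. \<bar>Fe x\<bar> \<noteq> \<infinity>" by (simp add: F_eq)
    show "\<exists>G. (\<forall>x. ((\<lambda>y. real_of_ereal (Fe y)) has_derivative (\<lambda>h. G x \<bullet> h)) (at x)) \<and> continuous_on UNIV G"
      using dF cDg by (intro exI[of _ Dg]) (simp add: F_eq)
    show "a_weakly_convex_rel \<Phi> Fe"
      unfolding a_weakly_convex_rel_def
    proof (intro allI impI)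
      fix xb vb x assume vb: "vb \<in> limiting_subdiff Fe xb"
      have "limiting_subdiff Fe xb = {Dg xb}" by (rule limiting_grad[OF F_eq dF cDg])
      with vb have v: "vb = Dg xb" by simp
      let ?Z = "grad (conj_fun \<Phi>) (- vb)"
      let ?Zc = "a1 *\<^sub>R grad (conj_fun \<phi>1) (- vb) + a2 *\<^sub>R grad (conj_fun \<phi>2) (- vb)"
      have Zeq: "?Z = ?Zc" using PC[of "- vb"] by blast
      have T: "\<Phi> ?Zc + (- vb) \<bullet> ((x - xb + ?Zc) - ?Zc) \<le> \<Phi> (x - xb + ?Zc)" using PC[of "- vb"] by blast
      have A: "\<Phi> ?Z - vb \<bullet> (x - xb) \<le> \<Phi> (x - xb + ?Z)" unfolding Zeq using T by simp
      have B: "Fr xb + vb \<bullet> (x - xb) \<le> Fr x" using low[of xb x] v by simp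
      from A B show "Fe xb - ereal (\<Phi> (x - xb + ?Z)) + ereal (\<Phi> ?Z) \<le> Fe x" by (simp add: F_eq)
    qed
    show "a_weakly_convex_rel \<Phi> (\<lambda>x. - Fe x)"
      unfolding a_weakly_convex_rel_def
    proof (intro allI impI)
      fix xb vb x assume vb: "vb \<in> limiting_subdiff (\<lambda>x. - Fe x) xb"
      have dm: "((\<lambda>x. - Fr x) has_derivative (\<lambda>h. (- Dg x) \<bullet> h)) (at x)" for x
        using has_derivative_minus[OF dF[of x]] by simp
      have "limiting_subdiff (\<lambda>x. - Fe x) xb = {- Dg xb}"
        by (rule limiting_grad[where hr="\<lambda>x. - Fr x"]) (auto simp: F_eq intro: has_derivative_minus[OF dF] continuous_on_minus[OF cDg])
      with vb have v: "- vb = Dg xb" by simp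
      let ?g = "Dg xb"
      let ?W1 = "grad (conj_fun \<phi>1) ?g" and ?W2 = "grad (conj_fun \<phi>2) ?g"
      let ?Z = "a1 *\<^sub>R ?W1 + a2 *\<^sub>R ?W2"
      have Z: "grad (conj_fun \<Phi>) (- vb) = ?Z" using PC[of ?g] v by simp
      have PZ: "\<Phi> ?Z = a1 * \<phi>1 ?W1 + a2 * \<phi>2 ?W2" using PC[of ?g] by blast
      obtain s where s: "\<Phi> (x - xb + ?Z) = Hx (x - xb + ?Z) s" using P_att by blast
      let ?y = "ys xb"
      let ?y' = "?y + s - a1 *\<^sub>R ?W1"
      have F1: "Fr x \<le> a1 * fr1 (?y' /\<^sub>R a1) + a2 * fr2 ((x - ?y') /\<^sub>R a2)"
        using ys[of x ?y'] unfolding Fr_def Gx_def .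
      have U1: "fr1 (?y' /\<^sub>R a1) \<le> fr1 (u1 xb) + \<phi>1 (s /\<^sub>R a1) - \<phi>1 ?W1"
      proof -
        have "?y' /\<^sub>R a1 - u1 xb + ?W1 = s /\<^sub>R a1" using a by (simp add: u1_def algebra_simps)
        then show ?thesis using up1[of "?y' /\<^sub>R a1" "u1 xb"] by (simp add: Dg_def)
      qed
      have U2: "fr2 ((x - ?y') /\<^sub>R a2) \<le> fr2 (u2 xb) + \<phi>2 ((x - xb + ?Z - s) /\<^sub>R a2) - \<phi>2 ?W2"
      proof -
        have "(x - ?y') /\<^sub>R a2 - u2 xb + ?W2 = (x - xb + ?Z - s) /\<^sub>R a2" using a by (simp add: u2_def algebra_simps)
        then show ?thesis using up2[of "(x - ?y') /\<^sub>R a2" "u2 xb"] by (simp add: Dg_def opt)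
      qed
      have "a1 * fr1 (?y' /\<^sub>R a1) \<le> a1 * (fr1 (u1 xb) + \<phi>1 (s /\<^sub>R a1) - \<phi>1 ?W1)"
        using U1 a by (intro mult_left_mono) auto
      moreover have "a2 * fr2 ((x - ?y') /\<^sub>R a2) \<le> a2 * (fr2 (u2 xb) + \<phi>2 ((x - xb + ?Z - s) /\<^sub>R a2) - \<phi>2 ?W2)"
        using U2 a by (intro mult_left_mono) auto
      ultimately have "Fr x \<le> Fr xb + \<Phi> (x - xb + ?Z) - \<Phi> ?Z"
        using F1 unfolding Fr_val[of xb] s PZ Hx_def by (simp add: algebra_simps)
      then show "- Fe xb - ereal (\<Phi> (x - xb + grad (conj_fun \<Phi>) (- vb))) + ereal (\<Phi> (grad (conj_fun \<Phi>) (- vb))) \<le> - Fe x"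
        unfolding Z by (simp add: F_eq)
    qed
  qed
  then show ?thesis unfolding \<Phi>_def Fe_def .
qed

end
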